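(* Let $A \in \mathbb{R}^{m\times n}$ have rank $r \ge 1$ with condition number $\kappa_2(A) = \|A\|_2/\sigma_r$, $\sigma_r$ its smallest nonzero singular value. Let $\bar{b} \in \mathcal{R}(A)$, $\bar b\neq 0$ (i.e. $\bar{b}|_{\mathcal{R}(A)^\perp} = 0$), let $E_2 \in \mathbb{R}^{m\times n}$ and $\delta b \in \mathbb{R}^m$ be perturbations, and set $\tilde{A} = A$, $\tilde{B} = A^{\mathsf{T}} + E_2^{\mathsf{T}}$, $b = \bar{b} + \delta b$. Let $x_{\min} = A^{\dagger}\bar{b}$ and define $\delta x_{\min}$ by $x_{\min} + \delta x_{\min} = (\tilde{B}\tilde{A})^{\dagger}\tilde{B}\, b$. Assume $\tilde{B}$ is an acute perturbation of $A^{\mathsf{T}}$, i.e. $\| P_{\mathcal{R}(\tilde{B})} - P_{\mathcal{R}(A^{\mathsf{T}})} \|_2 < 1$ and $\| P_{\mathcal{R}(\tilde{B}^{\mathsf{T}})} - P_{\mathcal{R}(A)} \|_2 < 1$. Then, to first order in the perturbations $(E_2, \delta b)$ (neglecting terms of second and higher order), \[ \frac{\| \delta x_{\min} \|_2}{\| x_{\min} \|_2} \leq \kappa_2(A) \frac{\| \delta b|_{\mathcal{R}(A)} \|_2}{\| \bar{b} \|_2}. \]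
   Context: $\mathcal{R}(\cdot)$ denotes the range of a matrix, $P_{\mathcal{S}}$ the orthogonal projection onto a subspace $\mathcal{S}$, $v|_{\mathcal{S}}$ the orthogonal projection of a vector $v$ onto $\mathcal{S}$, and $\dagger$ the Moore–Penrose pseudoinverse. *)

theory Defs
  imports "HOL-Analysis.Analysis"
begin

definition mat_norm2 :: "real^'n^'m \<Rightarrow> real" where
  "mat_norm2 M = onorm (\<lambda>x. M *v x)"

definition mat_range :: "real^'n^'m \<Rightarrow> (real^'m) set" where
  "mat_range M = range (\<lambda>x. M *v x)"

definition pinv :: "real^'n^'m \<Rightarrow> real^'m^'n" where
  "pinv M = (THE X. M ** X ** M = M \<and> X ** M ** X = X \<and>
                    transpose (M ** X) = M ** X \<and> transpose (X ** M) = X ** M)"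

definition orth_proj :: "(real^'m) set \<Rightarrow> real^'m^'m" where
  "orth_proj S = (THE P. \<forall>x. P *v x \<in> S \<and> (\<forall>y\<in>S. (x - P *v x) \<bullet> y = 0))"

definition nonzero_singular_values :: "real^'n^'m \<Rightarrow> real set" where
  "nonzero_singular_values M =
     {sqrt e | e. e > 0 \<and> (\<exists>v. v \<noteq> 0 \<and> (transpose M ** M) *v v = e *\<^sub>R v)}"

definition sigma_min_nz :: "real^'n^'m \<Rightarrow> real" where
  "sigma_min_nz M = Min (nonzero_singular_values M)"

definition cond2 :: "real^'n^'m \<Rightarrow> real" where
  "cond2 M = mat_norm2 M / sigma_min_nz M"

end

theory Submission
  imports Defs
begin

lemma adj: "inner (A *v x) y = inner x (transpose A *v (y::real^'m))" for A :: "real^'n^'m"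
  by (metis dot_lmul_matrix inner_commute transpose_matrix_vector)

lemma proj_ex1:
  fixes S :: "(real^'m) set"
  assumes "subspace S"
  shows "\<exists>!p. p \<in> S \<and> (\<forall>y\<in>S. (x - p) \<bullet> y = 0)"
proof -
  obtain p z where p: "p \<in> span S" "\<And>w. w \<in> span S \<Longrightarrow> orthogonal z w" "x = p + z"
    using orthogonal_subspace_decomp_exists[of S x] by blast
  have sp: "span S = S" using assms by simp
  have ex: "p \<in> S \<and> (\<forall>y\<in>S. (x - p) \<bullet> y = 0)"
    using p sp by (auto simp: orthogonal_def)
  show ?thesis
  proof (rule ex1I[of _ p])
    show "p \<in> S \<and> (\<forall>y\<in>S. (x - p) \<bullet> y = 0)" by (fact ex)
  next
    fix q assume q: "q \<in> S \<and> (\<forall>y\<in>S. (x - q) \<bullet> y = 0)"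
    have "p - q \<in> S" using q ex assms by (simp add: subspace_diff)
    hence "(x - q) \<bullet> (p - q) = 0" "(x - p) \<bullet> (p - q) = 0" using q ex by auto
    hence "(p - q) \<bullet> (p - q) = 0" by (simp add: inner_diff_left inner_diff_right)
    thus "q = p" by simp
  qed
qed

lemma orth_proj_props:
  fixes S :: "(real^'m) set"
  assumes "subspace S"
  shows "orth_proj S *v x \<in> S \<and> (\<forall>y\<in>S. (x - orth_proj S *v x) \<bullet> y = 0)"
proof -
  define f where "f x = (THE p. p \<in> S \<and> (\<forall>y\<in>S. (x - p) \<bullet> y = 0))" for x
  have f: "f x \<in> S \<and> (\<forall>y\<in>S. (x - f x) \<bullet> y = 0)" for x
    unfolding f_def by (rule theI'[OF proj_ex1[OF assms]])
  have funiq: "q = f x" if "q \<in> S \<and> (\<forall>y\<in>S. (x - q) \<bullet> y = 0)" for q x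
    using proj_ex1[OF assms, of x] f[of x] that by blast
  have lin: "linear f"
  proof
    fix a b show "f (a + b) = f a + f b"
      apply (rule funiq[symmetric])
      using f[of a] f[of b] assms by (auto simp: subspace_add inner_diff_left inner_add_left algebra_simps)
  next
    fix c a show "f (c *\<^sub>R a) = c *\<^sub>R f a"
      apply (rule funiq[symmetric])
      using f[of a] assms by (auto simp: subspace_scale inner_diff_left algebra_simps)
  qed
  have mf: "matrix f *v z = f z" for z
    using matrix_vector_mul(2)[OF lin] by metis
  have ex: "\<forall>x. matrix f *v x \<in> S \<and> (\<forall>y\<in>S. (x - matrix f *v x) \<bullet> y = 0)"
    using f mf by simp
  have "\<exists>!P. \<forall>x. P *v x \<in> S \<and> (\<forall>y\<in>S. (x - P *v x) \<bullet> y = 0)"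
  proof (rule ex1I[of _ "matrix f"])
    fix P assume "\<forall>x. P *v x \<in> S \<and> (\<forall>y\<in>S. (x - P *v x) \<bullet> y = 0)"
    hence "P *v x = f x" for x using funiq by blast
    thus "P = matrix f" using mf by (simp add: matrix_eq)
  qed (fact ex)
  from theI'[OF this] show ?thesis unfolding orth_proj_def by blast
qed

lemma sym_by_inner:
  fixes B :: "real^'n^'n"
  assumes "\<And>x y. (B *v x) \<bullet> y = x \<bullet> (B *v y)"
  shows "transpose B = B"
proof -
  have "transpose B *v y = B *v y" for y
  proof -
    have "x \<bullet> (transpose B *v y - B *v y) = 0" for x
      using assms[of x y] adj[of B x y] by (simp add: inner_diff_right)
    from this[of "transpose B *v y - B *v y"] show ?thesis by simp
  qed
  thus ?thesis by (simp add: matrix_eq)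
qed

definition lsq :: "real^'n^'m \<Rightarrow> real^'m \<Rightarrow> real^'n \<Rightarrow> bool" where
  "lsq M y u \<longleftrightarrow> (\<forall>k. M *v k = 0 \<longrightarrow> u \<bullet> k = 0) \<and> (\<forall>x. (M *v u - y) \<bullet> (M *v x) = 0)"

lemma lsq_ex1: "\<exists>!u. lsq M y u"
proof -
  let ?R = "range (\<lambda>x. M *v x)"
  let ?K = "{k. M *v k = 0}"
  have sR: "subspace ?R"
    unfolding subspace_def
  proof (intro conjI ballI allI)
    show "0 \<in> ?R" by (metis matrix_vector_mult_0_right rangeI)
  next
    fix a b assume "a \<in> ?R" "b \<in> ?R"
    then obtain a' b' where "a = M *v a'" "b = M *v b'" by blast
    thus "a + b \<in> ?R" by (metis matrix_vector_right_distrib rangeI)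
  next
    fix c a assume "a \<in> ?R"
    then obtain a' where "a = M *v a'" by blast
    thus "c *\<^sub>R a \<in> ?R" by (metis matrix_vector_mult_scaleR rangeI)
  qed
  have sK: "subspace ?K"
    by (auto simp: subspace_def algebra_simps)
  obtain p where p: "p \<in> ?R" "\<forall>z\<in>?R. (y - p) \<bullet> z = 0" using proj_ex1[OF sR, of y] by blast
  then obtain w where w: "p = M *v w" by blast
  obtain q where q: "q \<in> ?K" "\<forall>z\<in>?K. (w - q) \<bullet> z = 0" using proj_ex1[OF sK, of w] by blast
  have Mu: "M *v (w - q) = p" using q w by (simp add: algebra_simps)
  have ex: "lsq M y (w - q)"
    unfolding lsq_def
  proof (intro conjI allI impI)
    fix k assume "M *v k = 0" thus "(w - q) \<bullet> k = 0" using q by auto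
  next
    fix x have "(y - p) \<bullet> (M *v x) = 0" using p by auto
    thus "(M *v (w - q) - y) \<bullet> (M *v x) = 0" using Mu by (simp add: inner_diff_left)
  qed
  show ?thesis
  proof (rule ex1I[of _ "w - q"])
    fix u assume u: "lsq M y u"
    let ?d = "u - (w - q)"
    have "(M *v u - y) \<bullet> (M *v ?d) = 0" "(M *v (w - q) - y) \<bullet> (M *v ?d) = 0"
      using u ex unfolding lsq_def by blast+
    hence "(M *v ?d) \<bullet> (M *v ?d) = 0"
      by (simp add: algebra_simps inner_diff_left)
    hence "M *v ?d = 0" by simp
    hence "u \<bullet> ?d = 0" "(w - q) \<bullet> ?d = 0" using u ex unfolding lsq_def by blast+
    hence "?d \<bullet> ?d = 0" by (simp add: inner_diff_left)
    thus "u = w - q" by simp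
  qed (fact ex)
qed

definition penrose :: "real^'n^'m \<Rightarrow> real^'m^'n \<Rightarrow> bool" where
  "penrose M X \<longleftrightarrow> M ** X ** M = M \<and> X ** M ** X = X \<and>
                    transpose (M ** X) = M ** X \<and> transpose (X ** M) = X ** M"

lemma lsq_lin:
  fixes M :: "real^'n^'m"
  defines "g \<equiv> \<lambda>y. THE u. lsq M y u"
  shows "linear g" and "lsq M y (g y)"
proof -
  have g: "lsq M y (g y)" for y unfolding g_def by (rule theI'[OF lsq_ex1])
  have uq: "u = g y" if "lsq M y u" for u y using lsq_ex1[of M y] g[of y] that by blast
  show "lsq M y (g y)" by (fact g)
  show "linear g"
  proof
    fix a b show "g (a + b) = g a + g b"
      apply (rule uq[symmetric]) using g[of a] g[of b]
      by (auto simp: lsq_def algebra_simps inner_add_left inner_diff_left)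
  next
    fix c a show "g (c *\<^sub>R a) = c *\<^sub>R g a"
      apply (rule uq[symmetric]) using g[of a]
      by (auto simp: lsq_def algebra_simps inner_diff_left)
  qed
qed

lemma lsq_MXM:
  assumes "\<And>y. lsq M y (X *v y)"
  shows "M *v (X *v (M *v x)) = M *v x"
proof -
  let ?u = "X *v (M *v x)"
  have "(M *v ?u - M *v x) \<bullet> (M *v (?u - x)) = 0" using assms[of "M *v x"] unfolding lsq_def by blast
  hence "(M *v (?u - x)) \<bullet> (M *v (?u - x)) = 0" by (simp only: matrix_vector_mult_diff_distrib)
  hence "M *v (?u - x) = 0" by simp
  thus ?thesis by (simp add: matrix_vector_mult_diff_distrib)
qed

lemma lsq_penrose:
  assumes L: "\<And>y. lsq M y (X *v y)"
  shows "penrose M X"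
proof -
  have m1: "M *v (X *v (M *v x)) = M *v x" for x by (rule lsq_MXM[OF L])
  have m2: "X *v (M *v (X *v y)) = X *v y" for y
  proof -
    let ?u = "X *v y" let ?v = "X *v (M *v ?u)"
    have "M *v (?u - ?v) = 0" using m1[of ?u] by (simp add: algebra_simps)
    hence "?u \<bullet> (?u - ?v) = 0" "?v \<bullet> (?u - ?v) = 0" using L[of y] L[of "M *v ?u"] unfolding lsq_def by blast+
    hence "(?u - ?v) \<bullet> (?u - ?v) = 0" by (simp add: inner_diff_left)
    thus ?thesis by simp
  qed
  have s1: "(M *v (X *v y)) \<bullet> y' = (M *v (X *v y)) \<bullet> (M *v (X *v y'))" for y y'
  proof -
    have "(M *v (X *v y') - y') \<bullet> (M *v (X *v y)) = 0" using L[of y'] unfolding lsq_def by blast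
    hence "(M *v (X *v y')) \<bullet> (M *v (X *v y)) = y' \<bullet> (M *v (X *v y))" by (simp add: inner_diff_left)
    thus ?thesis by (metis inner_commute)
  qed
  have s2: "(X *v (M *v x)) \<bullet> x' = (X *v (M *v x)) \<bullet> (X *v (M *v x'))" for x x'
  proof -
    have "M *v (x' - X *v (M *v x')) = 0" using m1[of x'] by (simp add: algebra_simps)
    hence "(X *v (M *v x)) \<bullet> (x' - X *v (M *v x')) = 0" using L[of "M *v x"] unfolding lsq_def by blast
    thus ?thesis by (simp add: inner_diff_right)
  qed
  have t1: "transpose (M ** X) = M ** X"
    apply (rule sym_by_inner)
    using s1 by (simp add: matrix_vector_mul_assoc[symmetric]) (metis inner_commute)
  have t2: "transpose (X ** M) = X ** M"
    apply (rule sym_by_inner)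
    using s2 by (simp add: matrix_vector_mul_assoc[symmetric]) (metis inner_commute)
  show ?thesis unfolding penrose_def
    using t1 t2 m1 m2 by (simp add: matrix_eq matrix_vector_mul_assoc[symmetric])
qed

lemma penrose_lsq:
  assumes P: "penrose M Z"
  shows "lsq M y (Z *v y)"
proof -
  have m1: "M *v (Z *v (M *v x)) = M *v x" for x
    using P unfolding penrose_def by (metis matrix_vector_mul_assoc)
  have m2: "Z *v (M *v (Z *v x)) = Z *v x" for x
    using P unfolding penrose_def by (metis matrix_vector_mul_assoc)
  have t1: "(M *v (Z *v a)) \<bullet> b = a \<bullet> (M *v (Z *v b))" for a b
    using adj[of "M ** Z" a b] P unfolding penrose_def by (simp add: matrix_vector_mul_assoc)
  have t2: "(Z *v (M *v a)) \<bullet> b = a \<bullet> (Z *v (M *v b))" for a b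
    using adj[of "Z ** M" a b] P unfolding penrose_def by (simp add: matrix_vector_mul_assoc)
  show ?thesis unfolding lsq_def
  proof (intro conjI allI impI)
    fix k assume k: "M *v k = 0"
    have "(Z *v y) \<bullet> k = (Z *v (M *v (Z *v y))) \<bullet> k" using m2 by simp
    also have "\<dots> = (Z *v y) \<bullet> (Z *v (M *v k))" by (rule t2)
    finally show "(Z *v y) \<bullet> k = 0" using k by simp
  next
    fix x
    have "(M *v (Z *v y) - y) \<bullet> (M *v x) = (M *v (Z *v y) - y) \<bullet> (M *v (Z *v (M *v x)))" using m1 by simp
    also have "\<dots> = (M *v (Z *v (M *v (Z *v y) - y))) \<bullet> (M *v x)" using t1 by (metis inner_commute)
    also have "\<dots> = 0" using m1[of "Z *v y"] by (simp add: algebra_simps)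
    finally show "(M *v (Z *v y) - y) \<bullet> (M *v x) = 0" .
  qed
qed

lemma pinv_lsq: "lsq M y (pinv M *v y)"
proof -
  define g where "g \<equiv> \<lambda>y. THE u. lsq M y u"
  have lin: "linear g" and gl: "\<And>y. lsq M y (g y)" using lsq_lin unfolding g_def by blast+
  have mg: "matrix g *v z = g z" for z using matrix_vector_mul(2)[OF lin] by metis
  have "\<exists>!X. penrose M X"
  proof (rule ex1I[of _ "matrix g"])
    show "penrose M (matrix g)" by (rule lsq_penrose) (simp add: mg gl)
  next
    fix Z assume "penrose M Z"
    hence "lsq M y (Z *v y)" for y by (rule penrose_lsq)
    hence "Z *v y = g y" for y using lsq_ex1[of M y] gl[of y] by blast
    thus "Z = matrix g" by (simp add: matrix_eq mg)
  qed
  hence "penrose M (pinv M)" unfolding pinv_def penrose_def by (rule theI')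
  thus ?thesis by (rule penrose_lsq)
qed

lemma quad_zero:
  fixes p q :: real
  assumes "\<And>t. 0 \<le> t * p + t\<^sup>2 * q"
  shows "p = 0"
proof (rule ccontr)
  assume p: "p \<noteq> 0"
  define a where "a = \<bar>q\<bar> + 1"
  have pos: "a > 0" "q < a" unfolding a_def by auto
  define t where "t = - p / a"
  have "t * p + t\<^sup>2 * q = p\<^sup>2 * (q - a) / a\<^sup>2"
    unfolding t_def using pos by (simp add: field_simps power2_eq_square)
  moreover have "p\<^sup>2 * (q - a) < 0"
    using p pos by (intro mult_pos_neg) auto
  ultimately have "t * p + t\<^sup>2 * q < 0" using pos by (simp add: divide_neg_pos)
  thus False using assms[of t] by simp
qed

lemma norm_sq_expand:
  fixes a b :: "'a::real_inner"
  shows "(norm (a + t *\<^sub>R b))\<^sup>2 = (norm a)\<^sup>2 + 2 * t * (a \<bullet> b) + t\<^sup>2 * (norm b)\<^sup>2"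
  by (simp only: power2_norm_eq_inner) (simp add: inner_add_left inner_add_right inner_commute power2_eq_square algebra_simps)

lemma gram_sym: "(transpose A *v (A *v x)) \<bullet> y = (A *v x) \<bullet> (A *v y)" for A :: "real^'n^'m"
  by (metis adj inner_commute)

lemma nsv_finite: "finite (nonzero_singular_values (A :: real^'n^'m))"
proof -
  define G where "G = transpose A ** A"
  have G: "G *v x = transpose A *v (A *v x)" for x by (simp add: G_def matrix_vector_mul_assoc)
  define E where "E = {e::real. e > 0 \<and> (\<exists>v. v \<noteq> 0 \<and> G *v v = e *\<^sub>R v)}"
  define ev where "ev e = (SOME v. v \<noteq> 0 \<and> G *v v = e *\<^sub>R v)" for e
  have ev: "ev e \<noteq> 0 \<and> G *v ev e = e *\<^sub>R ev e" if "e \<in> E" for e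
    using that unfolding E_def ev_def by (metis (mono_tags, lifting) mem_Collect_eq someI_ex)
  have inj: "inj_on ev E"
  proof (rule inj_onI)
    fix e e' assume "e \<in> E" "e' \<in> E" "ev e = ev e'"
    hence "e *\<^sub>R ev e = e' *\<^sub>R ev e" "ev e \<noteq> 0" using ev by metis+
    thus "e = e'" by (metis scaleR_right_imp_eq)
  qed
  have orth: "pairwise orthogonal (ev ` E)"
  proof (clarsimp simp: pairwise_def orthogonal_def)
    fix e e' assume e: "e \<in> E" "e' \<in> E" "ev e \<noteq> ev e'"
    hence ne: "e \<noteq> e'" by auto
    have "e * (ev e \<bullet> ev e') = (G *v ev e) \<bullet> ev e'" using ev[OF e(1)] by simp
    also have "\<dots> = (A *v ev e) \<bullet> (A *v ev e')" by (simp only: G gram_sym)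
    also have "\<dots> = (G *v ev e') \<bullet> ev e" by (metis G gram_sym inner_commute)
    also have "\<dots> = e' * (ev e \<bullet> ev e')" using ev[OF e(2)] by (simp add: inner_commute)
    finally show "ev e \<bullet> ev e' = 0" using ne by simp
  qed
  have "0 \<notin> ev ` E" using ev by auto
  hence "independent (ev ` E)" using orth pairwise_orthogonal_independent by blast
  hence "finite (ev ` E)" using independent_bound by blast
  hence fE: "finite E" using inj finite_imageD by blast
  have "nonzero_singular_values A = sqrt ` E"
    unfolding nonzero_singular_values_def E_def G_def by auto
  thus ?thesis using fE by simp
qed

lemma sigma_facts:
  fixes A :: "real^'n^'m"
  assumes "A *v y1 \<noteq> 0"
  shows "sigma_min_nz A > 0"
    and "\<And>y. (\<forall>k. A *v k = 0 \<longrightarrow> y \<bullet> k = 0) \<Longrightarrow> sigma_min_nz A * norm y \<le> norm (A *v y)"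
proof -
  define S where "S = {y. \<forall>k. A *v k = 0 \<longrightarrow> y \<bullet> k = 0}"
  have sS: "subspace S" unfolding S_def subspace_def
    by (auto simp: inner_add_left)
  have cS: "closed S" by (rule closed_subspace[OF sS])
  define K where "K = S \<inter> sphere 0 1"
  have cK: "compact K" unfolding K_def using cS compact_sphere by (rule closed_Int_compact)
  define y2 where "y2 = pinv A *v (A *v y1)"
  have y2S: "y2 \<in> S" using pinv_lsq[of A "A *v y1"] unfolding S_def y2_def lsq_def by blast
  have Ay2: "A *v y2 = A *v y1" unfolding y2_def by (rule lsq_MXM) (rule pinv_lsq)
  hence y2nz: "y2 \<noteq> 0" using assms by auto
  have "y2 /\<^sub>R norm y2 \<in> K" unfolding K_def using y2S sS y2nz
    by (simp add: subspace_scale)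
  hence Kne: "K \<noteq> {}" by blast
  have cont: "continuous_on K (\<lambda>y. (norm (A *v y))\<^sup>2)"
    by (intro continuous_intros linear_continuous_on matrix_vector_mul_bounded_linear)
  obtain y0 where y0: "y0 \<in> K" "\<And>y. y \<in> K \<Longrightarrow> (norm (A *v y0))\<^sup>2 \<le> (norm (A *v y))\<^sup>2"
    using continuous_attains_inf[OF cK Kne cont] by blast
  define \<mu> where "\<mu> = (norm (A *v y0))\<^sup>2"
  have y0S: "y0 \<in> S" and ny0: "norm y0 = 1" using y0 unfolding K_def by auto
  have low: "\<mu> * (norm y)\<^sup>2 \<le> (norm (A *v y))\<^sup>2" if "y \<in> S" for y
  proof (cases "y = 0")
    case True thus ?thesis by simp
  next
    case False
    have "y /\<^sub>R norm y \<in> K" unfolding K_def using that sS False by (simp add: subspace_scale)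
    hence "\<mu> \<le> (norm (A *v (y /\<^sub>R norm y)))\<^sup>2" using y0 unfolding \<mu>_def by blast
    also have "\<dots> = (norm (A *v y))\<^sup>2 / (norm y)\<^sup>2"
      by (simp add: matrix_vector_mult_scaleR power_mult_distrib divide_inverse power_inverse mult.commute)
    finally show ?thesis using False by (simp add: field_simps)
  qed
  have mupos: "\<mu> > 0"
  proof -
    have "A *v y0 \<noteq> 0"
    proof
      assume "A *v y0 = 0"
      hence "y0 \<bullet> y0 = 0" using y0S unfolding S_def by blast
      thus False using ny0 by simp
    qed
    thus ?thesis unfolding \<mu>_def by simp
  qed
  have stat: "(transpose A *v (A *v y0) - \<mu> *\<^sub>R y0) \<bullet> w = 0" if wS: "w \<in> S" for w
  proof -
    have "0 \<le> t * (2 * ((A *v y0) \<bullet> (A *v w)) - 2 * \<mu> * (y0 \<bullet> w)) + t\<^sup>2 * ((norm (A *v w))\<^sup>2 - \<mu> * (norm w)\<^sup>2)" for t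
    proof -
      have "y0 + t *\<^sub>R w \<in> S" using sS y0S wS by (simp add: subspace_add subspace_scale)
      hence h1: "\<mu> * (norm (y0 + t *\<^sub>R w))\<^sup>2 \<le> (norm (A *v (y0 + t *\<^sub>R w)))\<^sup>2" by (rule low)
      have h2: "(norm (y0 + t *\<^sub>R w))\<^sup>2 = 1 + 2 * t * (y0 \<bullet> w) + t\<^sup>2 * (norm w)\<^sup>2"
        by (simp add: norm_sq_expand ny0)
      have h3: "(norm (A *v (y0 + t *\<^sub>R w)))\<^sup>2 = \<mu> + 2 * t * ((A *v y0) \<bullet> (A *v w)) + t\<^sup>2 * (norm (A *v w))\<^sup>2"
        unfolding \<mu>_def by (simp only: matrix_vector_right_distrib matrix_vector_mult_scaleR norm_sq_expand)
      have h4: "\<mu> * (1 + 2 * t * (y0 \<bullet> w) + t\<^sup>2 * (norm w)\<^sup>2) \<le> \<mu> + 2 * t * ((A *v y0) \<bullet> (A *v w)) + t\<^sup>2 * (norm (A *v w))\<^sup>2"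
        using h1 unfolding h2 h3 .
      have "t * (2 * ((A *v y0) \<bullet> (A *v w)) - 2 * \<mu> * (y0 \<bullet> w)) + t\<^sup>2 * ((norm (A *v w))\<^sup>2 - \<mu> * (norm w)\<^sup>2)
        = (\<mu> + 2 * t * ((A *v y0) \<bullet> (A *v w)) + t\<^sup>2 * (norm (A *v w))\<^sup>2) - \<mu> * (1 + 2 * t * (y0 \<bullet> w) + t\<^sup>2 * (norm w)\<^sup>2)"
        by (simp add: algebra_simps)
      thus ?thesis using h4 by linarith
    qed
    hence "2 * ((A *v y0) \<bullet> (A *v w)) - 2 * \<mu> * (y0 \<bullet> w) = 0" by (rule quad_zero)
    thus ?thesis by (simp only: inner_diff_left inner_scaleR_left gram_sym)
  qed
  have vS: "transpose A *v (A *v y0) - \<mu> *\<^sub>R y0 \<in> S"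
  proof -
    have "transpose A *v (A *v y0) \<in> S" unfolding S_def
    proof (clarify)
      fix k assume "A *v k = 0"
      have "(transpose A *v (A *v y0)) \<bullet> k = (A *v y0) \<bullet> (A *v k)" by (rule gram_sym)
      thus "(transpose A *v (A *v y0)) \<bullet> k = 0" using \<open>A *v k = 0\<close> by simp
    qed
    thus ?thesis using sS y0S by (simp add: subspace_diff subspace_scale)
  qed
  have "transpose A *v (A *v y0) - \<mu> *\<^sub>R y0 = 0" using stat[OF vS] by simp
  hence eig: "(transpose A ** A) *v y0 = \<mu> *\<^sub>R y0" by (simp add: matrix_vector_mul_assoc[symmetric])
  have mem: "sqrt \<mu> \<in> nonzero_singular_values A"
  proof -
    have "y0 \<noteq> 0" using ny0 by auto
    thus ?thesis unfolding nonzero_singular_values_def using mupos eig by blast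
  qed
  have fin: "finite (nonzero_singular_values A)" by (rule nsv_finite)
  have le: "sigma_min_nz A \<le> sqrt \<mu>" unfolding sigma_min_nz_def using fin mem by simp
  have "sigma_min_nz A \<in> nonzero_singular_values A" unfolding sigma_min_nz_def
    using fin mem by (intro Min_in) auto
  thus "sigma_min_nz A > 0" unfolding nonzero_singular_values_def by auto
  fix y assume "\<forall>k. A *v k = 0 \<longrightarrow> y \<bullet> k = 0"
  hence "y \<in> S" unfolding S_def by blast
  hence "\<mu> * (norm y)\<^sup>2 \<le> (norm (A *v y))\<^sup>2" by (rule low)
  hence "sqrt (\<mu> * (norm y)\<^sup>2) \<le> norm (A *v y)" by (simp add: real_le_lsqrt)
  hence "sqrt \<mu> * norm y \<le> norm (A *v y)" by (simp add: real_sqrt_mult)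
  moreover have "sigma_min_nz A * norm y \<le> sqrt \<mu> * norm y" using le by (simp add: mult_right_mono)
  ultimately show "sigma_min_nz A * norm y \<le> norm (A *v y)" by linarith
qed

lemma mn2: "norm (M *v x) \<le> mat_norm2 M * norm x" for M :: "real^'n^'m"
  unfolding mat_norm2_def by (rule onorm) simp

lemma mn2_nonneg: "0 \<le> mat_norm2 (M :: real^'n^'m)"
  unfolding mat_norm2_def by (rule onorm_pos_le) simp

lemma mn2_transpose: "norm (transpose M *v r) \<le> mat_norm2 M * norm r" for M :: "real^'n^'m"
proof (cases "transpose M *v r = 0")
  case True thus ?thesis using mn2_nonneg[of M] by simp
next
  case False
  let ?s = "transpose M *v r"
  have "(norm ?s)\<^sup>2 = (M *v ?s) \<bullet> r" by (simp add: adj power2_norm_eq_inner)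
  also have "\<dots> \<le> norm (M *v ?s) * norm r" by (rule Cauchy_Schwarz_ineq2[THEN order_trans[OF abs_ge_self]])
  also have "\<dots> \<le> mat_norm2 M * norm ?s * norm r" by (rule mult_right_mono[OF mn2]) simp
  finally have "norm ?s * norm ?s \<le> (mat_norm2 M * norm r) * norm ?s" by (simp add: power2_eq_square algebra_simps)
  thus ?thesis using False by simp
qed

lemma range_subspace: "subspace (mat_range (M :: real^'n^'m))"
  unfolding subspace_def mat_range_def
proof (intro conjI ballI allI)
  show "0 \<in> range ((*v) M)" by (metis matrix_vector_mult_0_right rangeI)
next
  fix a b assume "a \<in> range ((*v) M)" "b \<in> range ((*v) M)"
  then obtain a' b' where "a = M *v a'" "b = M *v b'" by blast
  thus "a + b \<in> range ((*v) M)" by (metis matrix_vector_right_distrib rangeI)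
next
  fix c a assume "a \<in> range ((*v) M)"
  then obtain a' where "a = M *v a'" by blast
  thus "c *\<^sub>R a \<in> range ((*v) M)" by (metis matrix_vector_mult_scaleR rangeI)
qed

theorem corollary1:
  fixes A :: "real^'n^'m" and bbar :: "real^'m"
  assumes "rank A \<ge> 1"
    and "bbar \<in> mat_range A" and "bbar \<noteq> 0"
  shows "\<exists>C \<epsilon>. \<epsilon> > 0 \<and>
    (\<forall>(E2 :: real^'n^'m) (db :: real^'m).
      let Bt = transpose A + transpose E2;
          b = bbar + db;
          xmin = pinv A *v bbar;
          dx = pinv (Bt ** A) *v (Bt *v b) - xmin
      in (mat_norm2 E2 + norm db < \<epsilon>
          \<and> mat_norm2 (orth_proj (mat_range Bt) - orth_proj (mat_range (transpose A))) < 1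
          \<and> mat_norm2 (orth_proj (mat_range (transpose Bt)) - orth_proj (mat_range A)) < 1)
         \<longrightarrow> norm dx / norm xmin
               \<le> cond2 A * norm (orth_proj (mat_range A) *v db) / norm bbar
                 + C * (mat_norm2 E2 + norm db)\<^sup>2)"
proof -
  obtain u where u: "bbar = A *v u" using assms(2) unfolding mat_range_def by blast
  have Au: "A *v u \<noteq> 0" using u assms(3) by simp
  define \<sigma> where "\<sigma> = sigma_min_nz A"
  have spos: "\<sigma> > 0" unfolding \<sigma>_def by (rule sigma_facts(1)[OF Au])
  have lowA: "\<sigma> * norm y \<le> norm (A *v y)" if "\<forall>k. A *v k = 0 \<longrightarrow> y \<bullet> k = 0" for y
    unfolding \<sigma>_def using sigma_facts(2)[OF Au that] .
  define a where "a = mat_norm2 A"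
  define nb where "nb = norm bbar"
  define xmin where "xmin = pinv A *v bbar"
  define nx where "nx = norm xmin"
  have Apinv: "A *v (pinv A *v (A *v v)) = A *v v" for v by (rule lsq_MXM) (rule pinv_lsq)
  have pinvA_perp: "\<forall>k. A *v k = 0 \<longrightarrow> (pinv A *v y) \<bullet> k = 0" for y
    using pinv_lsq[of A y] unfolding lsq_def by blast
  have Ax: "A *v xmin = bbar" unfolding xmin_def u by (rule Apinv)
  have xperp: "\<forall>k. A *v k = 0 \<longrightarrow> xmin \<bullet> k = 0" unfolding xmin_def by (rule pinvA_perp)
  have nbpos: "nb > 0" unfolding nb_def using assms(3) by simp
  have nbax: "nb \<le> a * nx" unfolding nb_def a_def nx_def using mn2[of A xmin] Ax by simp
  have nxpos: "nx > 0" using nbax nbpos mn2_nonneg[of A] unfolding a_def nx_def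
    by (metis mult_zero_right norm_ge_zero order_le_less not_less)
  define C where "C = 2 * a / (\<sigma>\<^sup>2 * nb)"
  define \<epsilon> where "\<epsilon> = \<sigma> / 2"
  show ?thesis
  proof (rule exI[of _ C], rule exI[of _ \<epsilon>], intro conjI allI)
    show "\<epsilon> > 0" unfolding \<epsilon>_def using spos by simp
  next
    fix E2 :: "real^'n^'m" and db :: "real^'m"
    have main: "norm (pinv ((transpose A + transpose E2) ** A) *v ((transpose A + transpose E2) *v (bbar + db)) - xmin) / norm xmin
            \<le> cond2 A * norm (orth_proj (mat_range A) *v db) / norm bbar + C * (mat_norm2 E2 + norm db)\<^sup>2"
      if H: "mat_norm2 E2 + norm db < \<epsilon>"
    proof -
      define Bt where "Bt = transpose A + transpose E2"
      define M where "M = Bt ** A"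
      define X where "X = pinv M"
      define e where "e = mat_norm2 E2"
      define d where "d = norm db"
      have e0: "e \<ge> 0" unfolding e_def by (rule mn2_nonneg)
      have d0: "d \<ge> 0" unfolding d_def by simp
      have esm: "e \<le> \<sigma> / 2" using H d0 unfolding e_def d_def \<epsilon>_def by linarith
      have Mv: "M *v y = transpose A *v (A *v y) + transpose E2 *v (A *v y)" for y
        unfolding M_def Bt_def by (simp add: matrix_vector_mul_assoc[symmetric] matrix_vector_mult_add_rdistrib del: transpose_matrix_vector)
      have lowM: "\<sigma>\<^sup>2 / 2 * norm y \<le> norm (M *v y)" if yp: "\<forall>k. A *v k = 0 \<longrightarrow> y \<bullet> k = 0" for y
      proof (cases "y = 0")
        case True thus ?thesis by simp
      next
        case False
        define t where "t = norm (A *v y)"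
        have tl: "\<sigma> * norm y \<le> t" unfolding t_def by (rule lowA[OF yp])
        have ip: "(M *v y) \<bullet> y = t\<^sup>2 + (A *v y) \<bullet> (E2 *v y)"
        proof -
          have "(M *v y) \<bullet> y = (transpose A *v (A *v y)) \<bullet> y + (transpose E2 *v (A *v y)) \<bullet> y"
            unfolding Mv by (simp only: inner_add_left)
          moreover have "(transpose A *v (A *v y)) \<bullet> y = t\<^sup>2" unfolding t_def
            by (simp only: gram_sym power2_norm_eq_inner)
          moreover have "(transpose E2 *v (A *v y)) \<bullet> y = (A *v y) \<bullet> (E2 *v y)"
            by (metis adj inner_commute)
          ultimately show ?thesis by simp
        qed
        have "\<bar>(A *v y) \<bullet> (E2 *v y)\<bar> \<le> t * norm (E2 *v y)" unfolding t_def by (rule Cauchy_Schwarz_ineq2)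
        also have "\<dots> \<le> t * (e * norm y)" unfolding t_def e_def by (rule mult_left_mono[OF mn2]) simp
        also have "\<dots> \<le> t * (\<sigma> / 2 * norm y)" unfolding t_def by (intro mult_left_mono mult_right_mono esm) simp_all
        finally have c1: "\<bar>(A *v y) \<bullet> (E2 *v y)\<bar> \<le> t * (\<sigma> / 2 * norm y)" .
        have "(M *v y) \<bullet> y \<le> norm (M *v y) * norm y" by (rule order_trans[OF abs_ge_self Cauchy_Schwarz_ineq2])
        hence c2: "t\<^sup>2 - t * (\<sigma> / 2 * norm y) \<le> norm (M *v y) * norm y" using ip c1 by linarith
        have "0 \<le> (t - \<sigma> * norm y) * (t + \<sigma> / 2 * norm y)"
        proof (intro mult_nonneg_nonneg)
          have "0 \<le> \<sigma> * norm y" using spos by simp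
          thus "0 \<le> t - \<sigma> * norm y" "0 \<le> t + \<sigma> / 2 * norm y" using tl by linarith+
        qed
        moreover have "(t - \<sigma> * norm y) * (t + \<sigma> / 2 * norm y) = t\<^sup>2 - t * (\<sigma> / 2 * norm y) - \<sigma>\<^sup>2 / 2 * norm y * norm y"
          by (simp add: field_simps power2_eq_square)
        ultimately have "\<sigma>\<^sup>2 / 2 * norm y * norm y \<le> t\<^sup>2 - t * (\<sigma> / 2 * norm y)"
          by linarith
        hence "\<sigma>\<^sup>2 / 2 * norm y * norm y \<le> norm (M *v y) * norm y" using c2 by linarith
        thus ?thesis using False by simp
      qed
      have NM: "A *v k = 0" if "M *v k = 0" for k
      proof -
        define w where "w = pinv A *v (A *v k)"
        have "A *v w = A *v k" unfolding w_def by (rule Apinv)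
        hence "M *v w = M *v k" unfolding Mv by simp
        hence "norm (M *v w) = 0" using that by simp
        hence "\<sigma>\<^sup>2 / 2 * norm w \<le> 0" using lowM[OF pinvA_perp[of "A *v k"]] unfolding w_def by simp
        hence "w = 0" using spos by (simp add: mult_le_0_iff)
        thus ?thesis using \<open>A *v w = A *v k\<close> by simp
      qed
      have Xperp: "\<forall>k. A *v k = 0 \<longrightarrow> (X *v y) \<bullet> k = 0" for y
      proof (intro allI impI)
        fix k assume "A *v k = 0"
        hence "M *v k = 0" unfolding Mv by simp
        thus "(X *v y) \<bullet> k = 0" using pinv_lsq[of M y] unfolding X_def lsq_def by blast
      qed
      have XM: "X *v (M *v v) = v" if vp: "\<forall>k. A *v k = 0 \<longrightarrow> v \<bullet> k = 0" for v
      proof -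
        let ?u = "X *v (M *v v)"
        have "M *v ?u = M *v v" unfolding X_def by (rule lsq_MXM) (rule pinv_lsq)
        hence "M *v (?u - v) = 0" by (simp add: matrix_vector_mult_diff_distrib)
        hence "A *v (?u - v) = 0" by (rule NM)
        hence "?u \<bullet> (?u - v) = 0" "v \<bullet> (?u - v) = 0" using Xperp vp by blast+
        hence "(?u - v) \<bullet> (?u - v) = 0" by (simp add: inner_diff_left)
        thus ?thesis by simp
      qed
      have Xb: "norm (X *v y) \<le> 2 / \<sigma>\<^sup>2 * norm y" for y
      proof -
        let ?x = "X *v y"
        have "(M *v ?x - y) \<bullet> (M *v ?x) = 0" using pinv_lsq[of M y] unfolding X_def lsq_def by blast
        hence "norm (M *v ?x) * norm (M *v ?x) = y \<bullet> (M *v ?x)"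
          by (simp add: inner_diff_left power2_eq_square[symmetric] power2_norm_eq_inner)
        also have "\<dots> \<le> norm y * norm (M *v ?x)" by (rule order_trans[OF abs_ge_self Cauchy_Schwarz_ineq2])
        finally have "norm (M *v ?x) \<le> norm y"
          by (metis mult_right_le_imp_le norm_ge_zero order_le_less mult_zero_right)
        moreover have "\<sigma>\<^sup>2 / 2 * norm ?x \<le> norm (M *v ?x)" by (rule lowM[OF Xperp])
        ultimately have "\<sigma>\<^sup>2 / 2 * norm ?x \<le> norm y" by linarith
        thus ?thesis using spos by (simp add: field_simps)
      qed
      define p where "p = orth_proj (mat_range A) *v db"
      define r where "r = db - p"
      have pr: "p \<in> mat_range A" "\<forall>z\<in>mat_range A. r \<bullet> z = 0"
        using orth_proj_props[OF range_subspace, of A db] unfolding p_def r_def by auto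
      obtain y0 where y0: "p = A *v y0" using pr(1) unfolding mat_range_def by blast
      have rA: "r \<bullet> (A *v x) = 0" for x using pr(2) unfolding mat_range_def by auto
      have ATr: "transpose A *v r = 0"
      proof -
        have "(transpose A *v r) \<bullet> (transpose A *v r) = 0"
          using rA[of "transpose A *v r"] by (simp add: adj inner_commute del: transpose_matrix_vector)
        thus ?thesis by simp
      qed
      have rd: "norm r \<le> d"
      proof -
        have "p \<bullet> r = 0" using rA y0 by (simp add: inner_commute)
        hence "(norm db)\<^sup>2 = (norm p)\<^sup>2 + (norm r)\<^sup>2" unfolding r_def
          by (simp add: power2_norm_eq_inner inner_diff_left inner_diff_right inner_commute)
        hence "(norm r)\<^sup>2 \<le> (norm db)\<^sup>2" by simp
        thus ?thesis unfolding d_def by (simp add: power2_le_iff_abs_le)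
      qed
      define z where "z = pinv A *v p"
      have Az: "A *v z = p" unfolding z_def y0 by (rule Apinv)
      have zperp: "\<forall>k. A *v k = 0 \<longrightarrow> z \<bullet> k = 0" unfolding z_def by (rule pinvA_perp)
      have zb: "\<sigma> * norm z \<le> norm p" using lowA[OF zperp] Az by simp
      have Btp: "X *v (Bt *v p) = z"
      proof -
        have "Bt *v p = M *v z" unfolding M_def Az[symmetric] by (simp add: matrix_vector_mul_assoc)
        thus ?thesis using XM[OF zperp] by simp
      qed
      have Btr: "Bt *v r = transpose E2 *v r" unfolding Bt_def
        by (simp add: matrix_vector_mult_add_rdistrib ATr del: transpose_matrix_vector)
      have Btx: "Bt *v bbar = M *v xmin" unfolding M_def Ax[symmetric] by (simp add: matrix_vector_mul_assoc)
      have dxeq: "X *v (Bt *v (bbar + db)) - xmin = z + X *v (transpose E2 *v r)"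
      proof -
        have "db = p + r" unfolding r_def by simp
        hence "Bt *v (bbar + db) = M *v xmin + Bt *v p + Bt *v r"
          by (simp add: Btx matrix_vector_right_distrib add.assoc)
        hence "X *v (Bt *v (bbar + db)) = X *v (M *v xmin) + X *v (Bt *v p) + X *v (Bt *v r)"
          by (simp add: matrix_vector_right_distrib)
        thus ?thesis using XM[OF xperp] Btp Btr by simp
      qed
      have dxb: "norm (X *v (Bt *v (bbar + db)) - xmin) \<le> norm p / \<sigma> + 2 / \<sigma>\<^sup>2 * (e * d)"
      proof -
        have "norm (X *v (Bt *v (bbar + db)) - xmin) \<le> norm z + norm (X *v (transpose E2 *v r))"
          unfolding dxeq by (rule norm_triangle_ineq)
        also have "norm z \<le> norm p / \<sigma>" using zb spos by (simp add: field_simps)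
        also have "norm (X *v (transpose E2 *v r)) \<le> 2 / \<sigma>\<^sup>2 * norm (transpose E2 *v r)" by (rule Xb)
        also have "\<dots> \<le> 2 / \<sigma>\<^sup>2 * (e * d)"
        proof (rule mult_left_mono)
          have "norm (transpose E2 *v r) \<le> e * norm r" unfolding e_def by (rule mn2_transpose)
          also have "\<dots> \<le> e * d" using rd e0 by (rule mult_left_mono)
          finally show "norm (transpose E2 *v r) \<le> e * d" .
        qed simp
        finally show ?thesis by simp
      qed
      define K where "K = norm p / \<sigma> + 2 / \<sigma>\<^sup>2 * (e * d)"
      have K0: "K \<ge> 0" unfolding K_def using spos e0 d0 by simp
      have s1: "norm (X *v (Bt *v (bbar + db)) - xmin) / nx \<le> K / nx"
        unfolding K_def using dxb nxpos by (simp add: divide_right_mono)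
      have "K * nb \<le> K * (a * nx)" using nbax K0 by (rule mult_left_mono)
      hence s2: "K / nx \<le> K * a / nb" using nxpos nbpos by (simp add: field_simps)
      have s3: "K * a / nb = a / \<sigma> * norm p / nb + C * (e * d)"
        unfolding K_def C_def using spos nbpos by (simp add: field_simps power2_eq_square)
      have ed: "e * d \<le> (e + d)\<^sup>2" using e0 d0 by (simp add: power2_eq_square algebra_simps)
      have C0: "C \<ge> 0" unfolding C_def a_def using mn2_nonneg[of A] spos nbpos by simp
      have s4: "C * (e * d) \<le> C * (e + d)\<^sup>2" using ed C0 by (rule mult_left_mono)
      have "norm (X *v (Bt *v (bbar + db)) - xmin) / nx \<le> a / \<sigma> * norm p / nb + C * (e + d)\<^sup>2"
        using s1 s2 s3 s4 by linarith
      thus ?thesis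
        unfolding X_def M_def Bt_def nx_def p_def nb_def cond2_def a_def \<sigma>_def e_def d_def .
    qed
    thus "let Bt = transpose A + transpose E2;
          b = bbar + db;
          xmin = pinv A *v bbar;
          dx = pinv (Bt ** A) *v (Bt *v b) - xmin
      in (mat_norm2 E2 + norm db < \<epsilon>
          \<and> mat_norm2 (orth_proj (mat_range Bt) - orth_proj (mat_range (transpose A))) < 1
          \<and> mat_norm2 (orth_proj (mat_range (transpose Bt)) - orth_proj (mat_range A)) < 1)
         \<longrightarrow> norm dx / norm xmin
               \<le> cond2 A * norm (orth_proj (mat_range A) *v db) / norm bbar
                 + C * (mat_norm2 E2 + norm db)\<^sup>2"
      unfolding Let_def xmin_def[symmetric] by blast
  qed
qed
end
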